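(* Consider a discounted Markov decision problem as described in the context, with discount factor $\gamma\in(0,1)$, and let $\rho\in\Delta(\mathcal{S})$. Let $\pi^{(0)}\in\Pi$ be arbitrary and consider the projected policy gradient method \[ \pi^{(k+1)}=\mathrm{proj}_{\Pi}\bigl(\pi^{(k)}-\eta_k\nabla V_\rho(\pi^{(k)})\bigr),\qquad k\ge 0, \] with constant step size $\eta_k=\frac{(1-\gamma)^3}{2\gamma|\mathcal{A}|}$ for all $k\ge0$ (i.e., the gradient is evaluated with the same distribution $\mu=\rho$ as the one used to measure performance). Then for all $k\ge1$, \[ V_\rho(\pi^{(k)})-V_\rho^\star\;\le\;\frac{128\,|\mathcal{S}|\,|\mathcal{A}|}{k\,(1-\gamma)^5}\left\|\frac{d_\rho(\pi^\star)}{\rho}\right\|_\infty^2 . \]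
   Context: A discounted Markov decision problem (in cost-minimization form) consists of a finite state set $\mathcal{S}$, a finite action set $\mathcal{A}$, transition probabilities $P(s'|s,a)$, a cost function $R:\mathcal{S}\times\mathcal{A}\to[0,1]$ (written $R_{s,a}$), and a discount factor $\gamma$. The set of (stationary randomized) policies is $\Pi=\Delta(\mathcal{A})^{|\mathcal{S}|}$, i.e. $\pi=(\pi_s)_{s\in\mathcal{S}}$ with $\pi_s$ a probability vector on $\mathcal{A}$ and $\pi_{s,a}$ the probability of action $a$ at state $s$; $\Pi$ is regarded as a subset of $\mathbf{R}^{|\mathcal{S}|\times|\mathcal{A}|}$. For $\pi\in\Pi$, $V_s(\pi)=\mathbf{E}\bigl[\sum_{t\ge0}\gamma^tR(s_t,a_t)\mid s_0=s\bigr]$ where $a_t\sim\pi_{s_t}$ and $s_{t+1}\sim P(\cdot|s_t,a_t)$; for $\rho\in\Delta(\mathcal{S})$, $V_\rho(\pi)=\sum_s\rho_sV_s(\pi)$ and $V_\rho^\star=\min_{\pi\in\Pi}V_\rho(\pi)$. $\pi^\star\in\Pi$ denotes an optimal policy, i.e. one minimizing $V_s(\cdot)$ simultaneously for all $s$ (such a policy exists). The $Q$-function is $Q_{s,a}(\pi)=R_{s,a}+\gamma\sum_{s'}P(s'|s,a)V_{s'}(\pi)$. The discounted state-visitation distribution is $d_{s,s'}(\pi)=(1-\gamma)\sum_{t\ge0}\gamma^t\Pr^\pi(s_t=s'\mid s_0=s)$ and $d_{\rho,s'}(\pi)=\sum_s\rho_sd_{s,s'}(\pi)$, giving $d_\rho(\pi)\in\Delta(\mathcal{S})$.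 The policy gradient $\nabla V_\rho(\pi)\in\mathbf{R}^{|\mathcal{S}|\times|\mathcal{A}|}$ has entries $\frac{1}{1-\gamma}d_{\rho,s}(\pi)Q_{s,a}(\pi)$. For $p,q\in\Delta(\mathcal{S})$, $\|p/q\|_\infty=\max_s p_s/q_s$ with the convention $0/0=1$ (and $c/0=+\infty$ for $c>0$). $\mathrm{proj}_\Pi$ is Euclidean projection onto $\Pi$. *)

theory Defs
  imports Complex_Main "HOL-Library.Extended_Real"
begin

text \<open>Finite discounted MDP, cost-minimisation form. P s a s' is the transition probability P(s'|s,a),
R s a the cost. Policies are functions pol s a = probability of action a in state s.\<close>

definition is_mdp :: "('s::finite \<Rightarrow> 'a::finite \<Rightarrow> 's \<Rightarrow> real) \<Rightarrow> ('s \<Rightarrow> 'a \<Rightarrow> real) \<Rightarrow> real \<Rightarrow> bool" where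
  "is_mdp P R \<gamma> \<longleftrightarrow>
     (\<forall>s a s'. 0 \<le> P s a s') \<and> (\<forall>s a. (\<Sum>s'\<in>UNIV. P s a s') = 1) \<and>
     (\<forall>s a. 0 \<le> R s a \<and> R s a \<le> 1) \<and> 0 < \<gamma> \<and> \<gamma> < 1"

definition is_distr :: "('s::finite \<Rightarrow> real) \<Rightarrow> bool" where
  "is_distr p \<longleftrightarrow> (\<forall>s. 0 \<le> p s) \<and> (\<Sum>s\<in>UNIV. p s) = 1"

definition Policies :: "('s::finite \<Rightarrow> 'a::finite \<Rightarrow> real) set" where
  "Policies = {pol. \<forall>s. (\<forall>a. 0 \<le> pol s a) \<and> (\<Sum>a\<in>UNIV. pol s a) = 1}"

definition Ppi :: "('s::finite \<Rightarrow> 'a::finite \<Rightarrow> 's \<Rightarrow> real) \<Rightarrow> ('s \<Rightarrow> 'a \<Rightarrow> real) \<Rightarrow> 's \<Rightarrow> 's \<Rightarrow> real" where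
  "Ppi P pol s s' = (\<Sum>a\<in>UNIV. pol s a * P s a s')"

fun Pstep :: "('s::finite \<Rightarrow> 'a::finite \<Rightarrow> 's \<Rightarrow> real) \<Rightarrow> ('s \<Rightarrow> 'a \<Rightarrow> real) \<Rightarrow> nat \<Rightarrow> 's \<Rightarrow> 's \<Rightarrow> real" where
  "Pstep P pol 0 s s' = (if s = s' then 1 else 0)"
| "Pstep P pol (Suc t) s s' = (\<Sum>s''\<in>UNIV. Pstep P pol t s s'' * Ppi P pol s'' s')"

definition Val :: "('s::finite \<Rightarrow> 'a::finite \<Rightarrow> 's \<Rightarrow> real) \<Rightarrow> ('s \<Rightarrow> 'a \<Rightarrow> real) \<Rightarrow> real \<Rightarrow> ('s \<Rightarrow> 'a \<Rightarrow> real) \<Rightarrow> 's \<Rightarrow> real" where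
  "Val P R \<gamma> pol s = (\<Sum>t. \<gamma> ^ t * (\<Sum>s'\<in>UNIV. Pstep P pol t s s' * (\<Sum>a\<in>UNIV. pol s' a * R s' a)))"

definition Val_rho :: "('s::finite \<Rightarrow> 'a::finite \<Rightarrow> 's \<Rightarrow> real) \<Rightarrow> ('s \<Rightarrow> 'a \<Rightarrow> real) \<Rightarrow> real \<Rightarrow> ('s \<Rightarrow> real) \<Rightarrow> ('s \<Rightarrow> 'a \<Rightarrow> real) \<Rightarrow> real" where
  "Val_rho P R \<gamma> \<rho> pol = (\<Sum>s\<in>UNIV. \<rho> s * Val P R \<gamma> pol s)"

definition Val_star :: "('s::finite \<Rightarrow> 'a::finite \<Rightarrow> 's \<Rightarrow> real) \<Rightarrow> ('s \<Rightarrow> 'a \<Rightarrow> real) \<Rightarrow> real \<Rightarrow> ('s \<Rightarrow> real) \<Rightarrow> real" where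
  "Val_star P R \<gamma> \<rho> = (INF pol\<in>Policies. Val_rho P R \<gamma> \<rho> pol)"

definition Qfun :: "('s::finite \<Rightarrow> 'a::finite \<Rightarrow> 's \<Rightarrow> real) \<Rightarrow> ('s \<Rightarrow> 'a \<Rightarrow> real) \<Rightarrow> real \<Rightarrow> ('s \<Rightarrow> 'a \<Rightarrow> real) \<Rightarrow> 's \<Rightarrow> 'a \<Rightarrow> real" where
  "Qfun P R \<gamma> pol s a = R s a + \<gamma> * (\<Sum>s'\<in>UNIV. P s a s' * Val P R \<gamma> pol s')"

definition dvisit :: "('s::finite \<Rightarrow> 'a::finite \<Rightarrow> 's \<Rightarrow> real) \<Rightarrow> real \<Rightarrow> ('s \<Rightarrow> 'a \<Rightarrow> real) \<Rightarrow> 's \<Rightarrow> 's \<Rightarrow> real" where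
  "dvisit P \<gamma> pol s s' = (1 - \<gamma>) * (\<Sum>t. \<gamma> ^ t * Pstep P pol t s s')"

definition dvisit_rho :: "('s::finite \<Rightarrow> 'a::finite \<Rightarrow> 's \<Rightarrow> real) \<Rightarrow> real \<Rightarrow> ('s \<Rightarrow> real) \<Rightarrow> ('s \<Rightarrow> 'a \<Rightarrow> real) \<Rightarrow> 's \<Rightarrow> real" where
  "dvisit_rho P \<gamma> \<rho> pol s' = (\<Sum>s\<in>UNIV. \<rho> s * dvisit P \<gamma> pol s s')"

definition grad_V :: "('s::finite \<Rightarrow> 'a::finite \<Rightarrow> 's \<Rightarrow> real) \<Rightarrow> ('s \<Rightarrow> 'a \<Rightarrow> real) \<Rightarrow> real \<Rightarrow> ('s \<Rightarrow> real) \<Rightarrow> ('s \<Rightarrow> 'a \<Rightarrow> real) \<Rightarrow> 's \<Rightarrow> 'a \<Rightarrow> real" where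
  "grad_V P R \<gamma> \<rho> pol s a = 1 / (1 - \<gamma>) * dvisit_rho P \<gamma> \<rho> pol s * Qfun P R \<gamma> pol s a"

definition proj_Pi :: "('s::finite \<Rightarrow> 'a::finite \<Rightarrow> real) \<Rightarrow> ('s \<Rightarrow> 'a \<Rightarrow> real)" where
  "proj_Pi x = (THE y. y \<in> Policies \<and>
     (\<forall>z\<in>Policies. (\<Sum>s\<in>UNIV. \<Sum>a\<in>UNIV. (x s a - y s a)^2) \<le> (\<Sum>s\<in>UNIV. \<Sum>a\<in>UNIV. (x s a - z s a)^2)))"

text \<open>||p/q||_inf = max_s p_s/q_s with 0/0 = 1 and c/0 = +inf for c > 0.\<close>
definition ratio_inf :: "('s::finite \<Rightarrow> real) \<Rightarrow> ('s \<Rightarrow> real) \<Rightarrow> ereal" where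
  "ratio_inf p q = Max (range (\<lambda>s. if q s = 0 then (if p s = 0 then 1 else \<infinity>) else ereal (p s / q s)))"

end

theory Submission
  imports Defs "HOL-Analysis.Analysis"
begin

definition Wt :: "('s::finite \<Rightarrow> 'a::finite \<Rightarrow> 's \<Rightarrow> real) \<Rightarrow> real \<Rightarrow> ('s \<Rightarrow> 'a \<Rightarrow> real) \<Rightarrow> ('s \<Rightarrow> real) \<Rightarrow> 's \<Rightarrow> real" where
  "Wt P \<gamma> pol h s = (\<Sum>t. \<gamma> ^ t * (\<Sum>s'\<in>UNIV. Pstep P pol t s s' * h s'))"

definition rpi :: "('s::finite \<Rightarrow> 'a::finite \<Rightarrow> real) \<Rightarrow> ('s \<Rightarrow> 'a \<Rightarrow> real) \<Rightarrow> 's \<Rightarrow> real" where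
  "rpi c pol s = (\<Sum>a\<in>UNIV. pol s a * c s a)"

definition ip :: "('s::finite \<Rightarrow> 'a::finite \<Rightarrow> real) \<Rightarrow> ('s \<Rightarrow> 'a \<Rightarrow> real) \<Rightarrow> real" where
  "ip x y = (\<Sum>s\<in>UNIV. \<Sum>a\<in>UNIV. x s a * y s a)"


lemma scalar_step:
  fixes \<delta> a nD gD Y Z D2 C L \<eta> S :: real
  assumes L0: "L > 0" and eta: "\<eta> = 1 / L" and F1: "- a - gD \<le> L / 2 * nD" and F2: "nD + \<eta> * gD \<le> 0"
    and F3: "\<eta> * Y \<le> Z" and F4: "Z^2 \<le> nD * D2" and D2: "D2 \<le> 2 * S" and F5: "\<delta> \<le> C * (- gD + Y)"
    and d0: "0 \<le> \<delta>" and dC: "\<delta> \<le> C" and C0: "0 \<le> C" and n0: "0 \<le> nD" and S0: "0 \<le> S"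
  shows "0 \<le> a \<and> \<delta>^2 \<le> (4 * C^2 + 16 * C^2 * L * S) * a"
proof -
  have G1: "L * nD + gD \<le> 0"
  proof -
    have "L * (nD + \<eta> * gD) \<le> 0" using F2 L0 by (simp add: mult_nonneg_nonpos)
    then show ?thesis using eta L0 by (simp add: algebra_simps)
  qed
  have G2: "L * nD \<le> 2 * a" using F1 G1 by linarith
  have a0: "0 \<le> a" using G2 L0 n0 by (smt (verit) mult_nonneg_nonneg)
  have G3: "- gD \<le> 2 * a" using F1 G1 by linarith
  have G4: "Y \<le> L * Z"
  proof -
    have "L * (\<eta> * Y) \<le> L * Z" using F3 L0 by simp
    then show ?thesis using eta L0 by simp
  qed
  have G5: "\<delta> \<le> 2 * C * a + C * L * Z"
  proof -
    have "C * (- gD + Y) \<le> C * (2 * a + L * Z)" using G3 G4 C0 by (intro mult_left_mono) auto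
    then show ?thesis using F5 by (simp add: algebra_simps)
  qed
  have t1: "0 \<le> 4 * C^2 * a" using a0 by simp
  have t2: "0 \<le> 16 * C^2 * L * S * a" using a0 L0 S0 by simp
  have "\<delta>^2 \<le> (4 * C^2 + 16 * C^2 * L * S) * a"
  proof (cases "\<delta> \<le> 4 * C * a")
    case True
    have "\<delta>^2 = \<delta> * \<delta>" by (simp add: power2_eq_square)
    also have "\<dots> \<le> (4 * C * a) * C" using True dC d0 by (intro mult_mono) auto
    finally have "\<delta>^2 \<le> 4 * C^2 * a" by (simp add: power2_eq_square mult_ac)
    then show ?thesis using t2 by (simp add: algebra_simps)
  next
    case False
    then have h: "\<delta> \<le> 2 * C * L * Z" using G5 by linarith
    have "\<delta>^2 \<le> (2 * C * L * Z)^2" using h d0 by (intro power_mono) auto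
    also have "\<dots> = 4 * C^2 * L^2 * Z^2" by (simp add: power_mult_distrib)
    also have "\<dots> \<le> 4 * C^2 * L^2 * (nD * (2 * S))"
    proof -
      have "Z^2 \<le> nD * (2 * S)" using F4 D2 n0 by (meson order_trans mult_left_mono)
      then show ?thesis by (intro mult_left_mono) auto
    qed
    also have "\<dots> = 8 * C^2 * L * S * (L * nD)" by (simp add: power2_eq_square mult_ac)
    also have "\<dots> \<le> 8 * C^2 * L * S * (2 * a)" using G2 L0 S0 by (intro mult_left_mono) auto
    finally have "\<delta>^2 \<le> 16 * C^2 * L * S * a" by (simp add: mult_ac)
    then show ?thesis using t1 by (simp add: algebra_simps)
  qed
  then show ?thesis using a0 by simp
qed

lemma quad_max: "0 < (K::real) \<Longrightarrow> t - t^2 / K \<le> K / 4"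
proof -
  assume K: "0 < K"
  have "0 \<le> (t - K/2)^2" by simp
  then have "K * t - t^2 \<le> K^2 / 4" by (simp add: power2_eq_square algebra_simps)
  then show ?thesis using K by (simp add: field_simps power2_eq_square)
qed

lemma quad_mono: "0 < (K::real) \<Longrightarrow> 0 \<le> t \<Longrightarrow> t \<le> u \<Longrightarrow> u \<le> K / 2 \<Longrightarrow> t - t^2 / K \<le> u - u^2 / K"
proof -
  assume K: "0 < K" and t: "0 \<le> t" "t \<le> u" "u \<le> K / 2"
  have "0 \<le> (u - t) * (K - (u + t))" using t by (intro mult_nonneg_nonneg) auto
  then have "K * t - t^2 \<le> K * u - u^2" by (simp add: power2_eq_square algebra_simps)
  then have "(K * t - t^2) / K \<le> (K * u - u^2) / K" using K by (intro divide_right_mono) auto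
  moreover have "(K * t - t^2) / K = t - t^2 / K" "(K * u - u^2) / K = u - u^2 / K" using K by (simp_all add: field_simps)
  ultimately show ?thesis by simp
qed

lemma recur:
  fixes \<delta> :: "nat \<Rightarrow> real"
  assumes K: "0 < K" and d0: "\<forall>k. 0 \<le> \<delta> k" and dr: "\<forall>k. (\<delta> k)^2 \<le> K * (\<delta> k - \<delta> (Suc k))"
  shows "1 \<le> k \<Longrightarrow> \<delta> k \<le> K / real k"
proof (induction k rule: dec_induct)
  have st: "\<delta> (Suc k) \<le> \<delta> k - (\<delta> k)^2 / K" for k
    using dr[rule_format, of k] K by (simp add: field_simps)
  {
    case base
    have "\<delta> (Suc 0) \<le> K / 4" using st[of 0] quad_max[OF K, of "\<delta> 0"] by linarith
    then show ?case using K by simp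
  next
    case (step k)
    show ?case
    proof (cases "k = 1")
      case True
      have "\<delta> (Suc 1) \<le> K / 4" using st[of 1] quad_max[OF K, of "\<delta> 1"] by linarith
      also have "\<dots> \<le> K / 2" using K by simp
      finally show ?thesis using True by simp
    next
      case False
      then have k2: "2 \<le> k" using step by simp
      have kr: "2 \<le> real k" using k2 by simp
      have "K / real k \<le> K / 2" using K kr by (intro divide_left_mono) auto
      then have "\<delta> (Suc k) \<le> K / real k - (K / real k)^2 / K"
        using st[of k] quad_mono[OF K d0[rule_format, of k] step(3)] by linarith
      also have "\<dots> = K * (real k - 1) / (real k)^2" using K kr by (simp add: field_simps power2_eq_square)
      also have "\<dots> \<le> K / real (Suc k)"
      proof -
        have "real k * real k \<le> 1 + (real k)^2" by (simp add: power2_eq_square)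
        then have "K * (real k * real k) \<le> K * (1 + (real k)^2)" using K by (intro mult_left_mono) auto
        then show ?thesis using K kr by (simp add: field_simps)
      qed
      finally show ?thesis .
    qed
  }
qed


lemma aux_lin: "t \<le> 32 * X \<Longrightarrow> 1 \<le> X \<Longrightarrow> 4 + t \<le> 36 * (X::real)" by linarith

lemma Val_Wt: "Val P c \<gamma> pol s = Wt P \<gamma> pol (rpi c pol) s"
  unfolding Val_def Wt_def rpi_def ..

lemma aux_gm: "\<bar>x\<bar> \<le> M \<Longrightarrow> 0 \<le> (\<gamma>::real) \<Longrightarrow> \<gamma> ^ t * \<bar>x\<bar> \<le> M * \<gamma> ^ t"
  by (metis mult_left_mono mult.commute zero_le_power)

lemma sum_abs_bound: "(\<forall>a. \<bar>S a\<bar> \<le> B) \<Longrightarrow> \<bar>\<Sum>a\<in>UNIV. D a * S a\<bar> \<le> (\<Sum>a\<in>UNIV. \<bar>D a\<bar>) * (B::real)"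
proof -
  assume S: "\<forall>a. \<bar>S a\<bar> \<le> B"
  have "\<bar>\<Sum>a\<in>UNIV. D a * S a\<bar> \<le> (\<Sum>a\<in>UNIV. \<bar>D a * S a\<bar>)" by (rule sum_abs)
  also have "\<dots> \<le> (\<Sum>a\<in>UNIV. \<bar>D a\<bar> * B)" using S by (intro sum_mono) (simp add: abs_mult mult_left_mono)
  finally show ?thesis by (simp add: sum_distrib_right)
qed

lemma tau_exists: "\<exists>\<tau>. (\<Sum>a\<in>UNIV. max (wv (a::'a::finite) - \<tau>) 0) = (1::real)"
proof -
  define h where "h = (\<lambda>\<tau>. \<Sum>a\<in>UNIV. max (wv (a::'a) - \<tau>) (0::real))"
  define a0 where "a0 = Min (range wv) - 1"
  define b0 where "b0 = Max (range wv)"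
  have mn: "Min (range wv) \<le> wv a" for a by (rule Min_le) auto
  have mx: "wv a \<le> Max (range wv)" for a by (rule Max_ge) auto
  have ab: "a0 \<le> b0" unfolding a0_def b0_def using mn[of undefined] mx[of undefined] by linarith
  have hb: "h b0 = 0" unfolding h_def b0_def using mx by (intro sum.neutral) (auto simp: max_def)
  have ha: "1 \<le> h a0"
  proof -
    have "max (wv undefined - a0) 0 \<le> h a0" unfolding h_def
      by (rule member_le_sum[where f="\<lambda>a. max (wv a - a0) 0"]) auto
    moreover have "1 \<le> wv undefined - a0" unfolding a0_def using mn[of undefined] by linarith
    then have "1 \<le> max (wv undefined - a0) 0" by linarith
    ultimately show ?thesis by simp
  qed
  have "continuous_on {a0..b0} h" unfolding h_def by (intro continuous_intros)
  then obtain t where "h t = 1" using IVT2'[of h b0 1 a0] hb ha ab by auto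
  then show ?thesis unfolding h_def by blast
qed

lemma proj_char_exists:
  "\<exists>z\<in>(Policies :: ('s::finite \<Rightarrow> 'a::finite \<Rightarrow> real) set). \<forall>y\<in>Policies. ip (\<lambda>s a. w s a - z s a) (\<lambda>s a. y s a - z s a) \<le> 0"
proof -
  have "\<forall>s. \<exists>\<tau>. (\<Sum>a\<in>UNIV. max (w s a - \<tau>) 0) = (1::real)" using tau_exists by blast
  then obtain \<tau> where tau: "\<forall>s. (\<Sum>a\<in>UNIV. max (w s a - \<tau> s) 0) = (1::real)" by metis
  define z where "z = (\<lambda>s a. max (w s a - \<tau> s) (0::real))"
  have zP: "z \<in> Policies" unfolding Policies_def z_def using tau by auto
  have "ip (\<lambda>s a. w s a - z s a) (\<lambda>s a. y s a - z s a) \<le> 0" if y: "y \<in> Policies" for y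
  proof -
    have "(\<Sum>a\<in>UNIV. (w s a - z s a) * (y s a - z s a)) \<le> 0" for s
    proof -
      have "(w s a - z s a) * (y s a - z s a) \<le> \<tau> s * (y s a - z s a)" for a
      proof (cases "w s a > \<tau> s")
        case True
        then show ?thesis unfolding z_def by simp
      next
        case False
        then have "z s a = 0" unfolding z_def by simp
        moreover have "w s a * y s a \<le> \<tau> s * y s a" using False y unfolding Policies_def
          by (intro mult_right_mono) auto
        ultimately show ?thesis by simp
      qed
      then have "(\<Sum>a\<in>UNIV. (w s a - z s a) * (y s a - z s a)) \<le> (\<Sum>a\<in>UNIV. \<tau> s * (y s a - z s a))"
        by (rule sum_mono)
      also have "\<dots> = 0" using y zP unfolding Policies_def
        by (simp add: sum_distrib_left[symmetric] sum_subtractf)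
      finally show ?thesis .
    qed
    then show ?thesis unfolding ip_def by (rule sum_nonpos)
  qed
  then show ?thesis using zP by blast
qed

lemma sq_expand:
  "(\<Sum>s\<in>UNIV. \<Sum>a\<in>UNIV. (w s a - y s a)^2) = (\<Sum>s\<in>UNIV. \<Sum>a\<in>UNIV. (w s a - z s a)^2)
     - 2 * ip (\<lambda>s a. w s a - z s a) (\<lambda>s a. y s a - z s a) + ip (\<lambda>s a. y s a - z s a) (\<lambda>s a. y s a - z s a)"
proof -
  have "(w s a - y s a)^2 = (w s a - z s a)^2 - 2 * ((w s a - z s a) * (y s a - z s a)) + (y s a - z s a) * (y s a - z s a)" for s a
    by (simp add: power2_eq_square algebra_simps)
  then show ?thesis unfolding ip_def by (simp add: sum.distrib sum_subtractf sum_distrib_left)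
qed

lemma ip_self_zero: "ip x x = 0 \<Longrightarrow> x = (\<lambda>s a. 0::real)"
proof -
  assume h: "ip x x = 0"
  have "\<forall>s\<in>UNIV. (\<Sum>a\<in>UNIV. x s a * x s a) = 0"
    using h unfolding ip_def by (subst sum_nonneg_eq_0_iff[symmetric]) (auto intro!: sum_nonneg)
  then have "\<forall>s a. x s a * x s a = 0"
    by (metis (no_types, lifting) UNIV_I finite zero_le_square sum_nonneg_eq_0_iff)
  then show ?thesis by auto
qed

lemma ip_self_nonneg: "0 \<le> ip x x"
  unfolding ip_def by (intro sum_nonneg) auto

lemma proj_char:
  fixes w :: "'s::finite \<Rightarrow> 'a::finite \<Rightarrow> real"
  shows "proj_Pi w \<in> Policies \<and> (\<forall>y\<in>Policies. ip (\<lambda>s a. w s a - proj_Pi w s a) (\<lambda>s a. y s a - proj_Pi w s a) \<le> 0)"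
proof -
  obtain z where zP: "z \<in> Policies" and zv: "\<forall>y\<in>Policies. ip (\<lambda>s a. w s a - z s a) (\<lambda>s a. y s a - z s a) \<le> 0"
    using proj_char_exists by blast
  have "proj_Pi w = z"
    unfolding proj_Pi_def
  proof (rule the_equality)
    show "z \<in> Policies \<and> (\<forall>y\<in>Policies. (\<Sum>s\<in>UNIV. \<Sum>a\<in>UNIV. (w s a - z s a)\<^sup>2) \<le> (\<Sum>s\<in>UNIV. \<Sum>a\<in>UNIV. (w s a - y s a)\<^sup>2))"
    proof (intro conjI ballI zP)
      fix y :: "'s \<Rightarrow> 'a \<Rightarrow> real" assume "y \<in> Policies"
      then show "(\<Sum>s\<in>UNIV. \<Sum>a\<in>UNIV. (w s a - z s a)\<^sup>2) \<le> (\<Sum>s\<in>UNIV. \<Sum>a\<in>UNIV. (w s a - y s a)\<^sup>2)"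
        using zv sq_expand[of w y z] ip_self_nonneg[of "\<lambda>s a. y s a - z s a"] by fastforce
    qed
  next
    fix y :: "'s \<Rightarrow> 'a \<Rightarrow> real" assume y: "y \<in> Policies \<and> (\<forall>z\<in>Policies. (\<Sum>s\<in>UNIV. \<Sum>a\<in>UNIV. (w s a - y s a)\<^sup>2) \<le> (\<Sum>s\<in>UNIV. \<Sum>a\<in>UNIV. (w s a - z s a)\<^sup>2))"
    then have "(\<Sum>s\<in>UNIV. \<Sum>a\<in>UNIV. (w s a - y s a)\<^sup>2) \<le> (\<Sum>s\<in>UNIV. \<Sum>a\<in>UNIV. (w s a - z s a)\<^sup>2)" using zP by blast
    then have "ip (\<lambda>s a. y s a - z s a) (\<lambda>s a. y s a - z s a) \<le> 0"
      using sq_expand[of w y z] zv[rule_format, of y] y by linarith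
    then have "ip (\<lambda>s a. y s a - z s a) (\<lambda>s a. y s a - z s a) = 0" using ip_self_nonneg by (metis order_antisym)
    then have "(\<lambda>s a. y s a - z s a) = (\<lambda>s a. 0)" by (rule ip_self_zero)
    then show "y = z" by (metis (no_types, lifting) eq_iff_diff_eq_0 ext)
  qed
  then show ?thesis using zP zv by simp
qed

lemma ip_cs:
  fixes u v :: "'s::finite \<Rightarrow> 'a::finite \<Rightarrow> real"
  shows "(ip u v)^2 \<le> ip u u * ip v v"
proof -
  have e: "ip x y = (\<Sum>q\<in>UNIV. x (fst q) (snd q) * y (fst q) (snd q))" for x y :: "'s::finite \<Rightarrow> 'a::finite \<Rightarrow> real"
    unfolding ip_def UNIV_Times_UNIV[symmetric] sum.cartesian_product by (simp add: case_prod_beta)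
  show ?thesis unfolding e using Cauchy_Schwarz_ineq_sum[of "\<lambda>q. u (fst q) (snd q)" "\<lambda>q. v (fst q) (snd q)" UNIV]
    by (simp add: power2_eq_square)
qed

lemma l1_bound: "(\<Sum>a\<in>UNIV. \<bar>D x a\<bar>)^2 \<le> real (card (UNIV :: 'a::finite set)) * ip D (D :: 's::finite \<Rightarrow> 'a \<Rightarrow> real)"
proof -
  have "(\<Sum>a\<in>UNIV. \<bar>D x a\<bar> * 1)^2 \<le> (\<Sum>a\<in>UNIV. \<bar>D x a\<bar>^2) * (\<Sum>a\<in>(UNIV::'a set). 1^2)"
    by (rule Cauchy_Schwarz_ineq_sum)
  also have "\<dots> = real (card (UNIV :: 'a set)) * (\<Sum>a\<in>UNIV. D x a * D x a)" by (simp add: power2_eq_square)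
  also have "(\<Sum>a\<in>UNIV. D x a * D x a) \<le> ip D D" unfolding ip_def
    by (rule member_le_sum[where f="\<lambda>s. \<Sum>a\<in>UNIV. D s a * D s a"]) (auto intro!: sum_nonneg)
  finally show ?thesis by (simp add: mult_left_mono)
qed

lemma diam:
  fixes p q :: "'s::finite \<Rightarrow> 'a::finite \<Rightarrow> real"
  shows "p \<in> Policies \<Longrightarrow> q \<in> Policies \<Longrightarrow> ip (\<lambda>s a. p s a - q s a) (\<lambda>s a. p s a - q s a) \<le> 2 * real (card (UNIV :: 's::finite set))"
proof -
  assume p: "p \<in> Policies" and q: "q \<in> Policies"
  have "(p s a - q s a) * (p s a - q s a) \<le> p s a + q s a" for s a
  proof -
    have b: "0 \<le> w s a \<and> w s a \<le> 1" if w: "w \<in> Policies" for w :: "'s \<Rightarrow> 'a \<Rightarrow> real"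
    proof -
      have w0: "\<forall>a. 0 \<le> w s a" and w1: "(\<Sum>a\<in>UNIV. w s a) = 1" using w unfolding Policies_def by auto
      have "w s a \<le> (\<Sum>a\<in>UNIV. w s a)" using w0 by (intro member_le_sum[where f="\<lambda>a. w s a"]) auto
      then show ?thesis using w0 w1 by auto
    qed
    have pp: "p s a * p s a \<le> p s a" using b[OF p] by (intro mult_right_le_one_le) auto
    have qq: "q s a * q s a \<le> q s a" using b[OF q] by (intro mult_right_le_one_le) auto
    have pq: "0 \<le> p s a * q s a" using b[OF p] b[OF q] by simp
    have "(p s a - q s a) * (p s a - q s a) = p s a * p s a + q s a * q s a - 2 * (p s a * q s a)" by (simp add: algebra_simps)
    then show ?thesis using pp qq pq by linarith
  qed
  then have "ip (\<lambda>s a. p s a - q s a) (\<lambda>s a. p s a - q s a) \<le> (\<Sum>s\<in>(UNIV::'s set). \<Sum>a\<in>UNIV. p s a + q s a)"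
    unfolding ip_def by (intro sum_mono) auto
  also have "\<dots> = (\<Sum>s\<in>(UNIV::'s set). 2)" using p q unfolding Policies_def by (simp add: sum.distrib)
  finally show ?thesis by simp
qed

context
  fixes P :: "'s::finite \<Rightarrow> 'a::finite \<Rightarrow> 's \<Rightarrow> real" and \<gamma> :: real
  assumes Pnn: "\<forall>s a s'. 0 \<le> P s a s'" and Psum: "\<forall>s a. (\<Sum>s'\<in>UNIV. P s a s') = 1"
    and g0: "0 \<le> \<gamma>" and g1: "\<gamma> < 1"
begin

lemma Ppi_nn: "pol \<in> Policies \<Longrightarrow> 0 \<le> Ppi P pol s s'"
  unfolding Ppi_def Policies_def using Pnn by (auto intro!: sum_nonneg)

lemma Ppi_sum: "pol \<in> Policies \<Longrightarrow> (\<Sum>s'\<in>UNIV. Ppi P pol s s') = 1"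
proof -
  assume "pol \<in> Policies"
  then have "(\<Sum>a\<in>UNIV. pol s a) = 1" unfolding Policies_def by auto
  then show ?thesis unfolding Ppi_def using Psum
    by (subst sum.swap) (simp add: sum_distrib_left[symmetric])
qed

lemma Pstep_nn: "pol \<in> Policies \<Longrightarrow> 0 \<le> Pstep P pol t s s'"
  by (induction t arbitrary: s') (auto intro!: sum_nonneg mult_nonneg_nonneg Ppi_nn)

lemma Pstep_sum: "pol \<in> Policies \<Longrightarrow> (\<Sum>s'\<in>UNIV. Pstep P pol t s s') = 1"
proof (induction t)
  case 0
  then show ?case by simp
next
  case (Suc t)
  have "(\<Sum>s'\<in>UNIV. Pstep P pol (Suc t) s s') = (\<Sum>s''\<in>UNIV. Pstep P pol t s s'' * (\<Sum>s'\<in>UNIV. Ppi P pol s'' s'))"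
    by (simp add: sum_distrib_left) (rule sum.swap)
  also have "\<dots> = 1" using Suc Ppi_sum by simp
  finally show ?case .
qed

lemma Pstep_Suc_left: "Pstep P pol (Suc t) s s' = (\<Sum>s''\<in>UNIV. Ppi P pol s s'' * Pstep P pol t s'' s')"
proof (induction t arbitrary: s')
  case 0
  have e1: "(\<Sum>y\<in>UNIV. Pstep P pol 0 s y * Ppi P pol y s') = Ppi P pol s s'"
  proof -
    have "(\<Sum>y\<in>UNIV. Pstep P pol 0 s y * Ppi P pol y s') = (\<Sum>y\<in>UNIV. if s = y then Ppi P pol y s' else 0)"
      by (rule sum.cong) auto
    then show ?thesis by simp
  qed
  have e2: "(\<Sum>y\<in>UNIV. Ppi P pol s y * Pstep P pol 0 y s') = Ppi P pol s s'"
  proof -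
    have "(\<Sum>y\<in>UNIV. Ppi P pol s y * Pstep P pol 0 y s') = (\<Sum>y\<in>UNIV. if y = s' then Ppi P pol s y else 0)"
      by (rule sum.cong) auto
    then show ?thesis by simp
  qed
  show ?case using e1 e2 by simp
next
  case (Suc t)
  have "Pstep P pol (Suc (Suc t)) s s' = (\<Sum>u\<in>UNIV. (\<Sum>v\<in>UNIV. Ppi P pol s v * Pstep P pol t v u) * Ppi P pol u s')"
    using Suc by simp
  also have "\<dots> = (\<Sum>v\<in>UNIV. Ppi P pol s v * (\<Sum>u\<in>UNIV. Pstep P pol t v u * Ppi P pol u s'))"
    by (simp add: sum_distrib_left sum_distrib_right mult.assoc) (rule sum.swap)
  also have "\<dots> = (\<Sum>v\<in>UNIV. Ppi P pol s v * Pstep P pol (Suc t) v s')" by simp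
  finally show ?case .
qed

lemma Pstep_abs_le: "pol \<in> Policies \<Longrightarrow> (\<forall>s. \<bar>h s\<bar> \<le> M) \<Longrightarrow> \<bar>\<Sum>s'\<in>UNIV. Pstep P pol t s s' * h s'\<bar> \<le> M"
proof -
  assume p: "pol \<in> Policies" and M: "\<forall>s. \<bar>h s\<bar> \<le> M"
  have "\<bar>\<Sum>s'\<in>UNIV. Pstep P pol t s s' * h s'\<bar> \<le> (\<Sum>s'\<in>UNIV. \<bar>Pstep P pol t s s' * h s'\<bar>)"
    by (rule sum_abs)
  also have "\<dots> \<le> (\<Sum>s'\<in>UNIV. Pstep P pol t s s' * M)"
    using M Pstep_nn[OF p] by (intro sum_mono) (simp add: abs_mult mult_left_mono)
  also have "\<dots> = M" using Pstep_sum[OF p] by (simp add: sum_distrib_right[symmetric])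
  finally show ?thesis .
qed

lemma Wt_summable_abs: "pol \<in> Policies \<Longrightarrow> (\<forall>s. \<bar>h s\<bar> \<le> M) \<Longrightarrow> summable (\<lambda>t. \<gamma> ^ t * (\<Sum>s'\<in>UNIV. Pstep P pol t s s' * h s'))"
proof -
  assume p: "pol \<in> Policies" and M: "\<forall>s. \<bar>h s\<bar> \<le> M"
  show ?thesis
  proof (rule summable_comparison_test')
    show "summable (\<lambda>t. M * \<gamma> ^ t)" using g0 g1 by (intro summable_mult summable_geometric) simp
    fix t show "norm (\<gamma> ^ t * (\<Sum>s'\<in>UNIV. Pstep P pol t s s' * h s')) \<le> M * \<gamma> ^ t"
      using Pstep_abs_le[OF p M, of t s] g0 by (simp add: abs_mult aux_gm)
  qed
qed

lemma bound_exists: "\<forall>s. \<bar>h s\<bar> \<le> (\<Sum>x\<in>UNIV. \<bar>h (x::'s)\<bar>::real)"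
  by (intro allI member_le_sum[where f="\<lambda>x. \<bar>h x\<bar>"]) auto


lemma Wt_summable: "pol \<in> Policies \<Longrightarrow> summable (\<lambda>t. \<gamma> ^ t * (\<Sum>s'\<in>UNIV. Pstep P pol t s s' * h s'))"
  using Wt_summable_abs bound_exists by blast

lemma Wt_bound: "pol \<in> Policies \<Longrightarrow> (\<forall>s. \<bar>h s\<bar> \<le> M) \<Longrightarrow> \<bar>Wt P \<gamma> pol h s\<bar> \<le> M / (1 - \<gamma>)"
proof -
  assume p: "pol \<in> Policies" and M: "\<forall>s. \<bar>h s\<bar> \<le> M"
  define f where "f = (\<lambda>t. \<gamma> ^ t * (\<Sum>s'\<in>UNIV. Pstep P pol t s s' * h s'))"
  have sg: "summable (\<lambda>t. M * \<gamma> ^ t)" using g0 g1 by (intro summable_mult summable_geometric) simp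
  have fb: "\<bar>f t\<bar> \<le> M * \<gamma> ^ t" for t
    unfolding f_def using Pstep_abs_le[OF p M, of t s] g0 by (simp add: abs_mult aux_gm)
  have sa: "summable (\<lambda>t. \<bar>f t\<bar>)"
    by (rule summable_comparison_test'[OF sg]) (simp add: fb)
  have "\<bar>Wt P \<gamma> pol h s\<bar> \<le> (\<Sum>t. \<bar>f t\<bar>)"
    unfolding Wt_def f_def[symmetric] by (rule summable_rabs[OF sa])
  also have "\<dots> \<le> (\<Sum>t. M * \<gamma> ^ t)"
    by (rule suminf_le[OF fb sa sg])
  also have "\<dots> = M / (1 - \<gamma>)" using g0 g1 by (simp add: suminf_mult suminf_geometric divide_simps)
  finally show ?thesis .
qed

lemma Wt_bellman:
  assumes p: "pol \<in> Policies"
  shows "Wt P \<gamma> pol h s = h s + \<gamma> * (\<Sum>s'\<in>UNIV. Ppi P pol s s' * Wt P \<gamma> pol h s')"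
proof -
  define g where "g = (\<lambda>x t. \<gamma> ^ t * (\<Sum>s'\<in>UNIV. Pstep P pol t x s' * h s'))"
  have sg: "summable (g x)" for x unfolding g_def by (rule Wt_summable[OF p])
  have f0: "g s 0 = h s"
  proof -
    have "(\<Sum>s'\<in>UNIV. Pstep P pol 0 s s' * h s') = (\<Sum>s'\<in>UNIV. if s = s' then h s' else 0)"
      by (rule sum.cong) auto
    then show ?thesis unfolding g_def by simp
  qed
  have fS: "g s (Suc t) = \<gamma> * (\<Sum>s''\<in>UNIV. Ppi P pol s s'' * g s'' t)" for t
  proof -
    have "(\<Sum>s'\<in>UNIV. Pstep P pol (Suc t) s s' * h s') = (\<Sum>s'\<in>UNIV. \<Sum>s''\<in>UNIV. Ppi P pol s s'' * (Pstep P pol t s'' s' * h s'))"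
      by (simp only: Pstep_Suc_left sum_distrib_right mult.assoc)
    also have "\<dots> = (\<Sum>s''\<in>UNIV. Ppi P pol s s'' * (\<Sum>s'\<in>UNIV. Pstep P pol t s'' s' * h s'))"
      by (subst sum.swap) (simp only: sum_distrib_left)
    moreover have "g s (Suc t) = \<gamma> * (\<gamma> ^ t * (\<Sum>s'\<in>UNIV. Pstep P pol (Suc t) s s' * h s'))"
      unfolding g_def by (simp only: power_Suc mult.assoc)
    ultimately have "g s (Suc t) = \<gamma> * (\<gamma> ^ t * (\<Sum>s''\<in>UNIV. Ppi P pol s s'' * (\<Sum>s'\<in>UNIV. Pstep P pol t s'' s' * h s')))"
      by simp
    then show ?thesis unfolding g_def by (simp add: sum_distrib_left mult.left_commute)
  qed
  have "(\<Sum>t. g s (Suc t)) = Wt P \<gamma> pol h s - h s"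
    using suminf_split_head[OF sg[of s]] f0 unfolding Wt_def g_def by simp
  moreover have "(\<Sum>t. g s (Suc t)) = \<gamma> * (\<Sum>s'\<in>UNIV. Ppi P pol s s' * Wt P \<gamma> pol h s')"
  proof -
    have s2: "summable (\<lambda>t. Ppi P pol s s'' * g s'' t)" for s'' by (intro summable_mult sg)
    have "(\<Sum>t. g s (Suc t)) = (\<Sum>t. \<gamma> * (\<Sum>s''\<in>UNIV. Ppi P pol s s'' * g s'' t))" by (simp only: fS)
    also have "\<dots> = \<gamma> * (\<Sum>t. (\<Sum>s''\<in>UNIV. Ppi P pol s s'' * g s'' t))"
      by (rule suminf_mult) (intro summable_sum s2)
    also have "(\<Sum>t. (\<Sum>s''\<in>UNIV. Ppi P pol s s'' * g s'' t)) = (\<Sum>s''\<in>UNIV. \<Sum>t. Ppi P pol s s'' * g s'' t)"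
      by (rule suminf_sum) (rule s2)
    also have "\<dots> = (\<Sum>s''\<in>UNIV. Ppi P pol s s'' * Wt P \<gamma> pol h s'')"
    proof (intro sum.cong refl)
      fix x
      have "(\<Sum>t. Ppi P pol s x * g x t) = Ppi P pol s x * suminf (g x)" by (rule suminf_mult[OF sg])
      moreover have "suminf (g x) = Wt P \<gamma> pol h x" by (simp add: Wt_def g_def)
      ultimately show "(\<Sum>t. Ppi P pol s x * g x t) = Ppi P pol s x * Wt P \<gamma> pol h x" by simp
    qed
    finally show ?thesis .
  qed
  ultimately show ?thesis by simp
qed

lemma stoch_abs_le: "(\<forall>x. 0 \<le> w x) \<Longrightarrow> (\<Sum>x\<in>UNIV. w x) = 1 \<Longrightarrow> (\<forall>x. \<bar>e x\<bar> \<le> m) \<Longrightarrow> \<bar>\<Sum>x\<in>UNIV. w x * e x\<bar> \<le> (m::real)"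
proof -
  assume w: "\<forall>x. 0 \<le> w x" and w1: "(\<Sum>x\<in>UNIV. w x) = 1" and M: "\<forall>x. \<bar>e x\<bar> \<le> m"
  have "\<bar>\<Sum>x\<in>UNIV. w x * e x\<bar> \<le> (\<Sum>x\<in>UNIV. \<bar>w x * e x\<bar>)" by (rule sum_abs)
  also have "\<dots> \<le> (\<Sum>x\<in>UNIV. w x * m)"
    using M w by (intro sum_mono) (simp add: abs_mult mult_left_mono)
  also have "\<dots> = m" using w1 by (simp add: sum_distrib_right[symmetric])
  finally show ?thesis .
qed

lemma Wt_unique:
  assumes p: "pol \<in> Policies" and u: "\<forall>s. u s = h s + \<gamma> * (\<Sum>s'\<in>UNIV. Ppi P pol s s' * u s')"
  shows "u s = Wt P \<gamma> pol h s"
proof -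
  define e where "e = (\<lambda>x. u x - Wt P \<gamma> pol h x)"
  have ee: "e x = \<gamma> * (\<Sum>s'\<in>UNIV. Ppi P pol x s' * e s')" for x
  proof -
    have "(\<Sum>s'\<in>UNIV. Ppi P pol x s' * e s') = (\<Sum>s'\<in>UNIV. Ppi P pol x s' * u s') - (\<Sum>s'\<in>UNIV. Ppi P pol x s' * Wt P \<gamma> pol h s')"
      unfolding e_def by (simp only: right_diff_distrib sum_subtractf)
    moreover have "e x = u x - Wt P \<gamma> pol h x" by (simp add: e_def)
    ultimately show ?thesis using u[rule_format, of x] Wt_bellman[OF p, of h x]
      by (simp only: right_diff_distrib)
  qed
  define m where "m = Max (range (\<lambda>x. \<bar>e x\<bar>))"
  have mge: "\<bar>e x\<bar> \<le> m" for x unfolding m_def by (rule Max_ge) auto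
  have "m \<in> range (\<lambda>x. \<bar>e x\<bar>)" unfolding m_def by (rule Max_in) auto
  then obtain x0 where x0: "m = \<bar>e x0\<bar>" by auto
  have "\<bar>e x0\<bar> \<le> \<gamma> * m"
  proof -
    have "\<bar>e x0\<bar> = \<gamma> * \<bar>\<Sum>s'\<in>UNIV. Ppi P pol x0 s' * e s'\<bar>" using ee[of x0] g0 by (simp add: abs_mult)
    also have "\<bar>\<Sum>s'\<in>UNIV. Ppi P pol x0 s' * e s'\<bar> \<le> m"
      using stoch_abs_le[of "Ppi P pol x0" e m] Ppi_nn[OF p] Ppi_sum[OF p] mge by blast
    then have "\<gamma> * \<bar>\<Sum>s'\<in>UNIV. Ppi P pol x0 s' * e s'\<bar> \<le> \<gamma> * m" using g0 by (rule mult_left_mono)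
    finally show ?thesis .
  qed
  then have "(1 - \<gamma>) * m \<le> 0" using x0 by (simp add: algebra_simps)
  then have "m \<le> 0" using g1 by (simp add: mult_le_0_iff)
  then show ?thesis using mge[of s] unfolding e_def by simp
qed

lemma Wt_nonneg: "pol \<in> Policies \<Longrightarrow> (\<forall>s. 0 \<le> h s) \<Longrightarrow> 0 \<le> Wt P \<gamma> pol h s"
  unfolding Wt_def by (intro suminf_nonneg Wt_summable) (auto intro!: mult_nonneg_nonneg sum_nonneg Pstep_nn g0 zero_le_power)

lemma dv_summable: "pol \<in> Policies \<Longrightarrow> summable (\<lambda>t. \<gamma> ^ t * Pstep P pol t s s')"
proof -
  assume p: "pol \<in> Policies"
  have "summable (\<lambda>t. \<gamma> ^ t * (\<Sum>x\<in>UNIV. Pstep P pol t s x * (if x = s' then 1 else 0)))"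
    by (rule Wt_summable[OF p])
  moreover have "(\<Sum>x\<in>UNIV. Pstep P pol t s x * (if x = s' then 1 else 0)) = Pstep P pol t s s'" for t
  proof -
    have "(\<Sum>x\<in>UNIV. Pstep P pol t s x * (if x = s' then 1 else 0)) = (\<Sum>x\<in>UNIV. if x = s' then Pstep P pol t s x else 0)"
      by (rule sum.cong) auto
    then show ?thesis by simp
  qed
  ultimately show ?thesis by simp
qed

lemma Wt_dvisit: "pol \<in> Policies \<Longrightarrow> Wt P \<gamma> pol h s = 1 / (1 - \<gamma>) * (\<Sum>s'\<in>UNIV. dvisit P \<gamma> pol s s' * h s')"
proof -
  assume p: "pol \<in> Policies"
  have "(\<Sum>s'\<in>UNIV. dvisit P \<gamma> pol s s' * h s') = (1 - \<gamma>) * (\<Sum>s'\<in>UNIV. (\<Sum>t. \<gamma> ^ t * Pstep P pol t s s') * h s')"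
    unfolding dvisit_def by (simp add: sum_distrib_left mult.assoc)
  also have "(\<Sum>s'\<in>UNIV. (\<Sum>t. \<gamma> ^ t * Pstep P pol t s s') * h s') = (\<Sum>s'\<in>UNIV. (\<Sum>t. \<gamma> ^ t * Pstep P pol t s s' * h s'))"
    by (intro sum.cong refl) (simp add: suminf_mult2 dv_summable p)
  also have "\<dots> = (\<Sum>t. \<Sum>s'\<in>UNIV. \<gamma> ^ t * Pstep P pol t s s' * h s')"
    by (rule suminf_sum[symmetric]) (intro summable_mult2 dv_summable p)
  also have "\<dots> = Wt P \<gamma> pol h s" unfolding Wt_def by (simp add: sum_distrib_left mult.assoc)
  finally show ?thesis using g1 by simp
qed

lemma dvisit_nn: "pol \<in> Policies \<Longrightarrow> 0 \<le> dvisit P \<gamma> pol s s'"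
  unfolding dvisit_def using g1 by (intro mult_nonneg_nonneg suminf_nonneg dv_summable)
    (auto intro!: mult_nonneg_nonneg Pstep_nn g0 zero_le_power)

lemma dvisit_sum: "pol \<in> Policies \<Longrightarrow> (\<Sum>s'\<in>UNIV. dvisit P \<gamma> pol s s') = 1"
proof -
  assume p: "pol \<in> Policies"
  have "Wt P \<gamma> pol (\<lambda>_. 1) s = (\<Sum>t. \<gamma> ^ t)" unfolding Wt_def using Pstep_sum[OF p] by simp
  also have "\<dots> = 1 / (1 - \<gamma>)" using g0 g1 by (simp add: suminf_geometric)
  finally show ?thesis using Wt_dvisit[OF p, of "\<lambda>_. 1" s] g1 by (simp add: divide_simps split: if_splits)
qed

lemma dvisit_diag: "pol \<in> Policies \<Longrightarrow> 1 - \<gamma> \<le> dvisit P \<gamma> pol s s"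
proof -
  assume p: "pol \<in> Policies"
  have "(\<Sum>t\<in>{0}. \<gamma> ^ t * Pstep P pol t s s) \<le> (\<Sum>t. \<gamma> ^ t * Pstep P pol t s s)"
    by (rule sum_le_suminf[OF dv_summable[OF p]]) (auto intro!: mult_nonneg_nonneg Pstep_nn p g0 zero_le_power)
  then show ?thesis unfolding dvisit_def using g1 by simp
qed

lemma Q_mix: "(\<Sum>a\<in>UNIV. w s a * Qfun P c \<gamma> pol s a) = rpi c w s + \<gamma> * (\<Sum>s'\<in>UNIV. Ppi P w s s' * Val P c \<gamma> pol s')"
proof -
  have "(\<Sum>a\<in>UNIV. w s a * Qfun P c \<gamma> pol s a) = rpi c w s + \<gamma> * (\<Sum>a\<in>UNIV. w s a * (\<Sum>s'\<in>UNIV. P s a s' * Val P c \<gamma> pol s'))"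
    unfolding Qfun_def rpi_def by (simp add: distrib_left sum.distrib sum_distrib_left mult.left_commute)
  also have "(\<Sum>a\<in>UNIV. w s a * (\<Sum>s'\<in>UNIV. P s a s' * Val P c \<gamma> pol s')) = (\<Sum>s'\<in>UNIV. Ppi P w s s' * Val P c \<gamma> pol s')"
    unfolding Ppi_def by (simp add: sum_distrib_left sum_distrib_right mult.assoc) (rule sum.swap)
  finally show ?thesis .
qed

lemma Q_avg: "pol \<in> Policies \<Longrightarrow> (\<Sum>a\<in>UNIV. pol s a * Qfun P c \<gamma> pol s a) = Val P c \<gamma> pol s"
  using Q_mix[of pol s c pol] Wt_bellman[of pol "rpi c pol" s] by (simp add: Val_Wt)

lemma PDL:
  assumes p: "pol \<in> Policies" and p': "pol' \<in> Policies"
  shows "Val P c \<gamma> pol' s - Val P c \<gamma> pol s = 1 / (1 - \<gamma>) * (\<Sum>s'\<in>UNIV. dvisit P \<gamma> pol' s s' * (\<Sum>a\<in>UNIV. (pol' s' a - pol s' a) * Qfun P c \<gamma> pol s' a))"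
proof -
  define A where "A = (\<lambda>x. \<Sum>a\<in>UNIV. (pol' x a - pol x a) * Qfun P c \<gamma> pol x a)"
  define u where "u = (\<lambda>x. Val P c \<gamma> pol' x - Val P c \<gamma> pol x)"
  have A2: "A x = rpi c pol' x + \<gamma> * (\<Sum>y\<in>UNIV. Ppi P pol' x y * Val P c \<gamma> pol y) - Val P c \<gamma> pol x" for x
    unfolding A_def using Q_mix[of pol' x c pol] Q_avg[OF p, of x c]
    by (simp add: left_diff_distrib sum_subtractf)
  have "\<forall>x. u x = A x + \<gamma> * (\<Sum>y\<in>UNIV. Ppi P pol' x y * u y)"
  proof
    fix x
    have b: "Val P c \<gamma> pol' x = rpi c pol' x + \<gamma> * (\<Sum>y\<in>UNIV. Ppi P pol' x y * Val P c \<gamma> pol' y)"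
      unfolding Val_Wt by (rule Wt_bellman[OF p'])
    have "(\<Sum>y\<in>UNIV. Ppi P pol' x y * u y) = (\<Sum>y\<in>UNIV. Ppi P pol' x y * Val P c \<gamma> pol' y) - (\<Sum>y\<in>UNIV. Ppi P pol' x y * Val P c \<gamma> pol y)"
      unfolding u_def by (simp only: right_diff_distrib sum_subtractf)
    then show "u x = A x + \<gamma> * (\<Sum>y\<in>UNIV. Ppi P pol' x y * u y)"
      using b A2[of x] unfolding u_def by (simp add: right_diff_distrib)
  qed
  then have "u s = Wt P \<gamma> pol' A s" by (rule Wt_unique[OF p'])
  then show ?thesis using Wt_dvisit[OF p', of A s] unfolding u_def A_def by simp
qed

lemma rpi_const: "pol \<in> Policies \<Longrightarrow> rpi (\<lambda>x a. G x) pol = G"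
  unfolding rpi_def Policies_def by (auto simp: sum_distrib_right[symmetric])

lemma Val_bounds:
  assumes p: "pol \<in> Policies" and c: "\<forall>s a. 0 \<le> c s a \<and> c s a \<le> 1"
  shows "0 \<le> Val P c \<gamma> pol s \<and> Val P c \<gamma> pol s \<le> 1 / (1 - \<gamma>)"
proof -
  have r0: "0 \<le> rpi c pol x" for x unfolding rpi_def using p c unfolding Policies_def
    by (auto intro!: sum_nonneg mult_nonneg_nonneg)
  have r1: "\<bar>rpi c pol x\<bar> \<le> 1" for x
  proof -
    have "\<bar>rpi c pol x\<bar> = \<bar>\<Sum>a\<in>UNIV. pol x a * c x a\<bar>" unfolding rpi_def ..
    also have "\<dots> \<le> 1" using p c unfolding Policies_def by (intro stoch_abs_le) auto
    finally show ?thesis .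
  qed
  show ?thesis unfolding Val_Wt using Wt_nonneg[OF p, of "rpi c pol" s] Wt_bound[OF p, of "rpi c pol" 1 s] r0 r1
    by auto
qed

lemma Q_bounds:
  assumes p: "pol \<in> Policies" and c: "\<forall>s a. 0 \<le> c s a \<and> c s a \<le> 1"
  shows "0 \<le> Qfun P c \<gamma> pol s a \<and> Qfun P c \<gamma> pol s a \<le> 1 / (1 - \<gamma>)"
proof -
  have vb: "\<bar>Val P c \<gamma> pol x\<bar> \<le> 1 / (1 - \<gamma>)" for x using Val_bounds[OF p c, of x] by auto
  have "\<bar>\<Sum>s'\<in>UNIV. P s a s' * Val P c \<gamma> pol s'\<bar> \<le> 1 / (1 - \<gamma>)"
    using Pnn Psum vb by (intro stoch_abs_le) auto
  moreover have "0 \<le> (\<Sum>s'\<in>UNIV. P s a s' * Val P c \<gamma> pol s')"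
    using Pnn Val_bounds[OF p c] by (auto intro!: sum_nonneg mult_nonneg_nonneg)
  moreover have "1 + \<gamma> * (1 / (1 - \<gamma>)) = 1 / (1 - \<gamma>)" using g1 by (simp add: field_simps)
  moreover have "\<gamma> * (\<Sum>s'\<in>UNIV. P s a s' * Val P c \<gamma> pol s') \<le> \<gamma> * (1 / (1 - \<gamma>))"
    using calculation(1) g0 by (intro mult_left_mono) auto
  ultimately show ?thesis unfolding Qfun_def using c[rule_format, of s a] g0
    by (smt (verit) mult_nonneg_nonneg)
qed

lemma grad_ip:
  assumes p: "pol \<in> Policies"
  shows "ip (grad_V P c \<gamma> \<rho> pol) D = (\<Sum>s\<in>UNIV. \<rho> s * Wt P \<gamma> pol (\<lambda>x. \<Sum>a\<in>UNIV. D x a * Qfun P c \<gamma> pol x a) s)"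
proof -
  define G where "G = (\<lambda>x. \<Sum>a\<in>UNIV. D x a * Qfun P c \<gamma> pol x a)"
  have "ip (grad_V P c \<gamma> \<rho> pol) D = (\<Sum>x\<in>UNIV. 1 / (1 - \<gamma>) * dvisit_rho P \<gamma> \<rho> pol x * G x)"
    unfolding ip_def grad_V_def G_def by (simp add: sum_distrib_left mult_ac)
  also have "\<dots> = (\<Sum>x\<in>UNIV. \<Sum>s\<in>UNIV. \<rho> s * (1 / (1 - \<gamma>) * (dvisit P \<gamma> pol s x * G x)))"
    unfolding dvisit_rho_def by (simp add: sum_distrib_left sum_distrib_right mult_ac)
  also have "\<dots> = (\<Sum>s\<in>UNIV. \<rho> s * (1 / (1 - \<gamma>) * (\<Sum>x\<in>UNIV. dvisit P \<gamma> pol s x * G x)))"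
    by (subst sum.swap) (simp add: sum_distrib_left)
  also have "\<dots> = (\<Sum>s\<in>UNIV. \<rho> s * Wt P \<gamma> pol G s)"
    using Wt_dvisit[OF p, of G] by simp
  finally show ?thesis unfolding G_def .
qed

lemma Vrho_diff:
  assumes p: "pol \<in> Policies" and p': "pol' \<in> Policies"
  shows "Val_rho P c \<gamma> \<rho> pol' - Val_rho P c \<gamma> \<rho> pol = (\<Sum>s\<in>UNIV. \<rho> s * Wt P \<gamma> pol' (\<lambda>x. \<Sum>a\<in>UNIV. (pol' x a - pol x a) * Qfun P c \<gamma> pol x a) s)"
  unfolding Val_rho_def sum_subtractf[symmetric] right_diff_distrib[symmetric]
  by (intro sum.cong refl arg_cong[where f="\<lambda>t. \<rho> _ * t"]) (simp add: PDL[OF p p'] Wt_dvisit[OF p'])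

lemma smooth_core:
  assumes p: "pol \<in> Policies" and p': "pol' \<in> Policies" and c: "\<forall>s a. 0 \<le> c s a \<and> c s a \<le> 1"
    and rho: "\<forall>s. 0 \<le> \<rho> s" "(\<Sum>s\<in>UNIV. \<rho> s) = 1"
    and N: "\<forall>x. (\<Sum>a\<in>UNIV. \<bar>pol' x a - pol x a\<bar>) \<le> N"
  shows "\<bar>Val_rho P c \<gamma> \<rho> pol' - Val_rho P c \<gamma> \<rho> pol - ip (grad_V P c \<gamma> \<rho> pol) (\<lambda>x a. pol' x a - pol x a)\<bar>
     \<le> \<gamma> * N^2 / (1 - \<gamma>)^3"
proof -
  define G where "G = (\<lambda>x. \<Sum>a\<in>UNIV. (pol' x a - pol x a) * Qfun P c \<gamma> pol x a)"
  define G' where "G' = (\<lambda>x (a::'a). G x)"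
  have g1': "0 < 1 - \<gamma>" using g1 by simp
  have N0: "0 \<le> N" using N by (meson order_trans sum_nonneg abs_ge_zero)
  have Gb: "\<bar>G x\<bar> \<le> N / (1 - \<gamma>)" for x
  proof -
    have "\<bar>G x\<bar> \<le> (\<Sum>a\<in>UNIV. \<bar>pol' x a - pol x a\<bar>) * (1 / (1 - \<gamma>))"
      unfolding G_def using Q_bounds[OF p c] by (intro sum_abs_bound) auto
    also have "\<dots> \<le> N * (1 / (1 - \<gamma>))" using N g1' by (intro mult_right_mono) auto
    finally show ?thesis by simp
  qed
  have WGb: "\<bar>Val P G' \<gamma> pol z\<bar> \<le> N / (1 - \<gamma>) / (1 - \<gamma>)" for z
    unfolding Val_Wt G'_def rpi_const[OF p] using Gb by (intro Wt_bound[OF p]) auto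
  have Hb: "\<bar>\<Sum>a\<in>UNIV. (pol' y a - pol y a) * Qfun P G' \<gamma> pol y a\<bar> \<le> \<gamma> * N^2 / (1 - \<gamma>)^2" for y
  proof -
    have sd: "(\<Sum>a\<in>UNIV. pol' y a - pol y a) = 0" using p p' unfolding Policies_def by (simp add: sum_subtractf)
    have "(\<Sum>a\<in>UNIV. (pol' y a - pol y a) * Qfun P G' \<gamma> pol y a)
       = G y * (\<Sum>a\<in>UNIV. pol' y a - pol y a) + \<gamma> * (\<Sum>a\<in>UNIV. (pol' y a - pol y a) * (\<Sum>z\<in>UNIV. P y a z * Val P G' \<gamma> pol z))"
      unfolding Qfun_def G'_def by (simp add: distrib_left sum.distrib sum_distrib_left sum_distrib_right mult_ac)
    also have "\<dots> = \<gamma> * (\<Sum>a\<in>UNIV. (pol' y a - pol y a) * (\<Sum>z\<in>UNIV. P y a z * Val P G' \<gamma> pol z))"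
      using sd by simp
    finally have e: "(\<Sum>a\<in>UNIV. (pol' y a - pol y a) * Qfun P G' \<gamma> pol y a) = \<gamma> * (\<Sum>a\<in>UNIV. (pol' y a - pol y a) * (\<Sum>z\<in>UNIV. P y a z * Val P G' \<gamma> pol z))" .
    have Sb: "\<forall>a. \<bar>\<Sum>z\<in>UNIV. P y a z * Val P G' \<gamma> pol z\<bar> \<le> N / (1 - \<gamma>) / (1 - \<gamma>)"
      using Pnn Psum WGb by (intro allI stoch_abs_le) auto
    have "\<bar>\<Sum>a\<in>UNIV. (pol' y a - pol y a) * (\<Sum>z\<in>UNIV. P y a z * Val P G' \<gamma> pol z)\<bar>
       \<le> (\<Sum>a\<in>UNIV. \<bar>pol' y a - pol y a\<bar>) * (N / (1 - \<gamma>) / (1 - \<gamma>))"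
      by (rule sum_abs_bound[OF Sb])
    also have "\<dots> \<le> N * (N / (1 - \<gamma>) / (1 - \<gamma>))" using N N0 g1' by (intro mult_right_mono) auto
    finally have "\<gamma> * \<bar>\<Sum>a\<in>UNIV. (pol' y a - pol y a) * (\<Sum>z\<in>UNIV. P y a z * Val P G' \<gamma> pol z)\<bar> \<le> \<gamma> * (N * (N / (1 - \<gamma>) / (1 - \<gamma>)))"
      using g0 by (rule mult_left_mono)
    then show ?thesis unfolding e using g0 by (simp add: abs_mult power2_eq_square)
  qed
  have Db: "\<bar>Wt P \<gamma> pol' G s - Wt P \<gamma> pol G s\<bar> \<le> \<gamma> * N^2 / (1 - \<gamma>)^3" for s
  proof -
    have "Wt P \<gamma> pol' G s - Wt P \<gamma> pol G s = Val P G' \<gamma> pol' s - Val P G' \<gamma> pol s"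
      unfolding Val_Wt G'_def rpi_const[OF p] rpi_const[OF p'] ..
    also have "\<dots> = 1 / (1 - \<gamma>) * (\<Sum>y\<in>UNIV. dvisit P \<gamma> pol' s y * (\<Sum>a\<in>UNIV. (pol' y a - pol y a) * Qfun P G' \<gamma> pol y a))"
      by (rule PDL[OF p p'])
    finally have e: "Wt P \<gamma> pol' G s - Wt P \<gamma> pol G s = \<dots>" .
    have "\<bar>\<Sum>y\<in>UNIV. dvisit P \<gamma> pol' s y * (\<Sum>a\<in>UNIV. (pol' y a - pol y a) * Qfun P G' \<gamma> pol y a)\<bar> \<le> \<gamma> * N^2 / (1 - \<gamma>)^2"
      using dvisit_nn[OF p'] dvisit_sum[OF p'] Hb by (intro stoch_abs_le) auto
    then have "1 / (1 - \<gamma>) * \<bar>\<Sum>y\<in>UNIV. dvisit P \<gamma> pol' s y * (\<Sum>a\<in>UNIV. (pol' y a - pol y a) * Qfun P G' \<gamma> pol y a)\<bar> \<le> 1 / (1 - \<gamma>) * (\<gamma> * N^2 / (1 - \<gamma>)^2)"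
      using g1' by (intro mult_left_mono) auto
    then show ?thesis unfolding e using g1' by (simp add: abs_mult power3_eq_cube power2_eq_square mult_ac)
  qed
  have "Val_rho P c \<gamma> \<rho> pol' - Val_rho P c \<gamma> \<rho> pol - ip (grad_V P c \<gamma> \<rho> pol) (\<lambda>x a. pol' x a - pol x a)
      = (\<Sum>s\<in>UNIV. \<rho> s * (Wt P \<gamma> pol' G s - Wt P \<gamma> pol G s))"
    unfolding Vrho_diff[OF p p'] grad_ip[OF p] G_def by (simp add: right_diff_distrib sum_subtractf)
  also have "\<bar>\<dots>\<bar> \<le> \<gamma> * N^2 / (1 - \<gamma>)^3"
    using rho Db by (intro stoch_abs_le) auto
  finally show ?thesis .
qed

lemma drho_lower:
  assumes p: "pol \<in> Policies" and rho: "\<forall>s. 0 \<le> \<rho> s"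
  shows "(1 - \<gamma>) * \<rho> y \<le> dvisit_rho P \<gamma> \<rho> pol y"
proof -
  have "\<rho> y * dvisit P \<gamma> pol y y \<le> dvisit_rho P \<gamma> \<rho> pol y"
    unfolding dvisit_rho_def using rho dvisit_nn[OF p]
    by (intro member_le_sum[where f="\<lambda>s. \<rho> s * dvisit P \<gamma> pol s y"]) auto
  moreover have "(1 - \<gamma>) * \<rho> y \<le> \<rho> y * dvisit P \<gamma> pol y y"
    using dvisit_diag[OF p, of y] rho by (simp add: mult.commute mult_left_mono)
  ultimately show ?thesis by simp
qed

lemma grad_dom:
  assumes p: "pol \<in> Policies" and ps: "pis \<in> Policies"
    and rho: "\<forall>s. 0 \<le> \<rho> s" and R0: "0 \<le> R" and Rb: "\<forall>s. dvisit_rho P \<gamma> \<rho> pis s \<le> R * \<rho> s"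
  shows "\<exists>pb\<in>Policies. Val_rho P c \<gamma> \<rho> pol - Val_rho P c \<gamma> \<rho> pis
      \<le> R / (1 - \<gamma>) * ip (grad_V P c \<gamma> \<rho> pol) (\<lambda>x a. pol x a - pb x a)"
proof -
  define Q where "Q = Qfun P c \<gamma> pol"
  have g1': "0 < 1 - \<gamma>" using g1 by simp
  have "\<forall>x. \<exists>a. \<forall>b. Q x a \<le> Q x b"
  proof
    fix x
    have "Min (range (Q x)) \<in> range (Q x)" by (rule Min_in) auto
    then obtain a where "Q x a = Min (range (Q x))" by (metis rangeE)
    then show "\<exists>a. \<forall>b. Q x a \<le> Q x b" by (metis Min_le finite UNIV_I finite_imageI image_eqI)
  qed
  then obtain am where am: "\<forall>x b. Q x (am x) \<le> Q x b" by metis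
  define pb where "pb = (\<lambda>x a. if a = am x then 1 else (0::real))"
  have pbP: "pb \<in> Policies" unfolding Policies_def pb_def by auto
  have pbQ: "(\<Sum>a\<in>UNIV. pb x a * Q x a) = Q x (am x)" for x
  proof -
    have "(\<Sum>a\<in>UNIV. pb x a * Q x a) = (\<Sum>a\<in>UNIV. if a = am x then Q x a else 0)"
      unfolding pb_def by (rule sum.cong) auto
    then show ?thesis by simp
  qed
  have minle: "Q x (am x) \<le> (\<Sum>a\<in>UNIV. w x a * Q x a)" if w: "w \<in> Policies" for w x
  proof -
    have "Q x (am x) = (\<Sum>a\<in>UNIV. w x a * Q x (am x))" using w unfolding Policies_def by (simp add: sum_distrib_right[symmetric])
    also have "\<dots> \<le> (\<Sum>a\<in>UNIV. w x a * Q x a)" using w am unfolding Policies_def by (intro sum_mono mult_left_mono) auto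
    finally show ?thesis .
  qed
  define m where "m = (\<lambda>x. \<Sum>a\<in>UNIV. (pol x a - pb x a) * Q x a)"
  have m_eq: "m x = (\<Sum>a\<in>UNIV. pol x a * Q x a) - Q x (am x)" for x
    unfolding m_def by (simp add: left_diff_distrib sum_subtractf pbQ)
  have m0: "0 \<le> m x" for x using minle[OF p, of x] m_eq[of x] by simp
  have Am: "- m x \<le> (\<Sum>a\<in>UNIV. (pis x a - pol x a) * Q x a)" for x
    using minle[OF ps, of x] m_eq[of x] by (simp add: left_diff_distrib sum_subtractf)
  have per_s: "Val P c \<gamma> pol s - Val P c \<gamma> pis s \<le> 1 / (1 - \<gamma>) * (\<Sum>y\<in>UNIV. dvisit P \<gamma> pis s y * m y)" for s
  proof -
    have "- (\<Sum>y\<in>UNIV. dvisit P \<gamma> pis s y * m y) \<le> (\<Sum>y\<in>UNIV. dvisit P \<gamma> pis s y * (\<Sum>a\<in>UNIV. (pis y a - pol y a) * Q y a))"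
      unfolding sum_negf[symmetric] using Am dvisit_nn[OF ps]
      by (intro sum_mono) (metis minus_mult_right mult_left_mono)
    then have "1 / (1 - \<gamma>) * (- (\<Sum>y\<in>UNIV. dvisit P \<gamma> pis s y * m y)) \<le> 1 / (1 - \<gamma>) * (\<Sum>y\<in>UNIV. dvisit P \<gamma> pis s y * (\<Sum>a\<in>UNIV. (pis y a - pol y a) * Q y a))"
      using g1' by (intro mult_left_mono) auto
    then show ?thesis using PDL[OF p ps, of c s] unfolding Q_def by simp
  qed
  have "Val_rho P c \<gamma> \<rho> pol - Val_rho P c \<gamma> \<rho> pis = (\<Sum>s\<in>UNIV. \<rho> s * (Val P c \<gamma> pol s - Val P c \<gamma> pis s))"
    unfolding Val_rho_def by (simp add: right_diff_distrib sum_subtractf)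
  also have "\<dots> \<le> (\<Sum>s\<in>UNIV. \<rho> s * (1 / (1 - \<gamma>) * (\<Sum>y\<in>UNIV. dvisit P \<gamma> pis s y * m y)))"
    using rho per_s by (intro sum_mono mult_left_mono) auto
  also have "\<dots> = 1 / (1 - \<gamma>) * (\<Sum>y\<in>UNIV. dvisit_rho P \<gamma> \<rho> pis y * m y)"
    unfolding dvisit_rho_def by (simp add: sum_distrib_left sum_distrib_right mult_ac) (rule sum.swap)
  also have "\<dots> \<le> 1 / (1 - \<gamma>) * (\<Sum>y\<in>UNIV. R / (1 - \<gamma>) * dvisit_rho P \<gamma> \<rho> pol y * m y)"
  proof -
    have "dvisit_rho P \<gamma> \<rho> pis y * m y \<le> R / (1 - \<gamma>) * dvisit_rho P \<gamma> \<rho> pol y * m y" for y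
    proof -
      have "dvisit_rho P \<gamma> \<rho> pis y \<le> R * \<rho> y" using Rb by auto
      also have "R * \<rho> y \<le> R / (1 - \<gamma>) * dvisit_rho P \<gamma> \<rho> pol y"
      proof -
        have "\<rho> y \<le> dvisit_rho P \<gamma> \<rho> pol y / (1 - \<gamma>)"
          using drho_lower[OF p rho, of y] g1' by (simp add: field_simps)
        then have "R * \<rho> y \<le> R * (dvisit_rho P \<gamma> \<rho> pol y / (1 - \<gamma>))" using R0 by (rule mult_left_mono)
        then show ?thesis by simp
      qed
      finally show ?thesis using m0[of y] by (rule mult_right_mono)
    qed
    then show ?thesis using g1' by (intro mult_left_mono sum_mono) auto
  qed
  also have "\<dots> = R / (1 - \<gamma>) * ip (grad_V P c \<gamma> \<rho> pol) (\<lambda>x a. pol x a - pb x a)"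
    unfolding ip_def grad_V_def m_def Q_def by (simp add: sum_distrib_left mult_ac)
  finally show ?thesis using pbP by blast
qed

lemma Vrho_bounds:
  assumes p: "pol \<in> Policies" and c: "\<forall>s a. 0 \<le> c s a \<and> c s a \<le> 1"
    and rho: "\<forall>s. 0 \<le> \<rho> s" "(\<Sum>s\<in>UNIV. \<rho> s) = 1"
  shows "0 \<le> Val_rho P c \<gamma> \<rho> pol \<and> Val_rho P c \<gamma> \<rho> pol \<le> 1 / (1 - \<gamma>)"
proof -
  have "Val_rho P c \<gamma> \<rho> pol \<le> (\<Sum>s\<in>UNIV. \<rho> s * (1 / (1 - \<gamma>)))"
    unfolding Val_rho_def using Val_bounds[OF p c] rho by (intro sum_mono mult_left_mono) auto
  also have "\<dots> = 1 / (1 - \<gamma>)" using rho by (simp add: sum_distrib_right[symmetric] del: times_divide_eq_right)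
  finally show ?thesis unfolding Val_rho_def using Val_bounds[OF p c] rho
    by (auto intro!: sum_nonneg mult_nonneg_nonneg)
qed

lemma one_step:
  assumes gp: "0 < \<gamma>" and c: "\<forall>s a. 0 \<le> c s a \<and> c s a \<le> 1"
    and rho: "\<forall>s. 0 \<le> \<rho> s" "(\<Sum>s\<in>UNIV. \<rho> s) = 1"
    and ps: "pis \<in> Policies" and optv: "\<forall>pol\<in>Policies. Val_rho P c \<gamma> \<rho> pis \<le> Val_rho P c \<gamma> \<rho> pol"
    and R1: "1 \<le> R" and Rb: "\<forall>s. dvisit_rho P \<gamma> \<rho> pis s \<le> R * \<rho> s"
    and x: "x \<in> Policies"
    and eta: "\<eta> = (1 - \<gamma>)^3 / (2 * \<gamma> * real (card (UNIV :: 'a set)))"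
    and pn: "pn = proj_Pi (\<lambda>s a. x s a - \<eta> * grad_V P c \<gamma> \<rho> x s a)"
  shows "pn \<in> Policies \<and> 0 \<le> Val_rho P c \<gamma> \<rho> x - Val_rho P c \<gamma> \<rho> pn \<and>
    (Val_rho P c \<gamma> \<rho> x - Val_rho P c \<gamma> \<rho> pis)^2
      \<le> 36 * R^2 * real (card (UNIV :: 's set)) * real (card (UNIV :: 'a set)) / (1 - \<gamma>)^5 * (Val_rho P c \<gamma> \<rho> x - Val_rho P c \<gamma> \<rho> pn)"
proof -
  define A where "A = real (card (UNIV :: 'a set))"
  define S where "S = real (card (UNIV :: 's set))"
  have A1: "1 \<le> A" unfolding A_def by (simp add: Suc_le_eq)
  have S1: "1 \<le> S" unfolding S_def by (simp add: Suc_le_eq)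
  have g1': "0 < 1 - \<gamma>" using g1 by simp
  define L where "L = 2 * \<gamma> * A / (1 - \<gamma>)^3"
  have L0: "0 < L" unfolding L_def using gp A1 g1' by simp
  have etaL: "\<eta> = 1 / L" unfolding eta L_def A_def by simp
  define g where "g = grad_V P c \<gamma> \<rho> x"
  define w where "w = (\<lambda>s a. x s a - \<eta> * g s a)"
  have pnP: "pn \<in> Policies" and VI: "\<forall>y\<in>Policies. ip (\<lambda>s a. w s a - pn s a) (\<lambda>s a. y s a - pn s a) \<le> 0"
    using proj_char[of w] unfolding pn w_def g_def by auto
  define D where "D = (\<lambda>s a. pn s a - x s a)"
  define nD where "nD = ip D D"
  define gD where "gD = ip g D"
  define a where "a = Val_rho P c \<gamma> \<rho> x - Val_rho P c \<gamma> \<rho> pn"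
  define \<delta> where "\<delta> = Val_rho P c \<gamma> \<rho> x - Val_rho P c \<gamma> \<rho> pis"
  define C where "C = R / (1 - \<gamma>)"
  have n0: "0 \<le> nD" unfolding nD_def by (rule ip_self_nonneg)
  define N where "N = sqrt (A * nD)"
  have Nb: "\<forall>y. (\<Sum>b\<in>UNIV. \<bar>pn y b - x y b\<bar>) \<le> N"
  proof
    fix y
    have "(\<Sum>b\<in>UNIV. \<bar>D y b\<bar>)^2 \<le> A * nD" unfolding A_def nD_def by (rule l1_bound)
    then show "(\<Sum>b\<in>UNIV. \<bar>pn y b - x y b\<bar>) \<le> N" unfolding N_def D_def by (intro real_le_rsqrt)
  qed
  have N2: "N^2 = A * nD" unfolding N_def using A1 n0 by simp
  have sm: "\<bar>Val_rho P c \<gamma> \<rho> pn - Val_rho P c \<gamma> \<rho> x - gD\<bar> \<le> \<gamma> * N^2 / (1 - \<gamma>)^3"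
    using smooth_core[OF x pnP c rho Nb] unfolding gD_def g_def D_def .
  have F1: "- a - gD \<le> L / 2 * nD"
  proof -
    have "\<gamma> * N^2 / (1 - \<gamma>)^3 = L / 2 * nD" unfolding N2 L_def by simp
    then show ?thesis using sm unfolding a_def by linarith
  qed
  have F2: "nD + \<eta> * gD \<le> 0"
  proof -
    have "ip (\<lambda>s a. w s a - pn s a) (\<lambda>s a. x s a - pn s a) = nD + \<eta> * gD"
      unfolding ip_def nD_def gD_def w_def D_def
      by (simp add: sum_distrib_left sum.distrib[symmetric] algebra_simps)
    then show ?thesis using VI x by fastforce
  qed
  obtain pb where pbP: "pb \<in> Policies" and GD: "\<delta> \<le> C * ip g (\<lambda>s a. x s a - pb s a)"
    using grad_dom[OF x ps rho(1) _ Rb, of c] R1 unfolding \<delta>_def C_def g_def by auto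
  define Y where "Y = ip g (\<lambda>s a. pn s a - pb s a)"
  define Z where "Z = ip (\<lambda>s a. x s a - pn s a) (\<lambda>s a. pn s a - pb s a)"
  define D2 where "D2 = ip (\<lambda>s a. pn s a - pb s a) (\<lambda>s a. pn s a - pb s a)"
  have F3: "\<eta> * Y \<le> Z"
  proof -
    have "ip (\<lambda>s a. w s a - pn s a) (\<lambda>s a. pb s a - pn s a) = \<eta> * Y - Z"
      unfolding ip_def Y_def Z_def w_def
      by (simp add: sum_distrib_left sum_subtractf[symmetric] algebra_simps)
    then show ?thesis using VI pbP by fastforce
  qed
  have F4: "Z^2 \<le> nD * D2"
  proof -
    have "ip (\<lambda>s a. x s a - pn s a) (\<lambda>s a. x s a - pn s a) = nD"
      unfolding nD_def D_def ip_def by (simp add: algebra_simps)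
    then show ?thesis using ip_cs[of "\<lambda>s a. x s a - pn s a" "\<lambda>s a. pn s a - pb s a"] unfolding Z_def D2_def by simp
  qed
  have D2b: "D2 \<le> 2 * S" unfolding D2_def S_def by (rule diam[OF pnP pbP])
  have F5: "\<delta> \<le> C * (- gD + Y)"
  proof -
    have "ip g (\<lambda>s a. x s a - pb s a) = - gD + Y"
      unfolding ip_def gD_def Y_def D_def
      by (simp add: sum_distrib_left sum_negf[symmetric] sum.distrib[symmetric] algebra_simps)
    then show ?thesis using GD by simp
  qed
  have d0: "0 \<le> \<delta>" unfolding \<delta>_def using optv x by auto
  have dC: "\<delta> \<le> C"
  proof -
    have "\<delta> \<le> 1 / (1 - \<gamma>)" unfolding \<delta>_def using Vrho_bounds[OF x c rho] Vrho_bounds[OF ps c rho] by linarith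
    also have "\<dots> \<le> C" unfolding C_def using R1 g1' by (simp add: divide_right_mono)
    finally show ?thesis .
  qed
  have C0: "0 \<le> C" unfolding C_def using R1 g1' by simp
  have S0: "0 \<le> S" using S1 by simp
  have main: "0 \<le> a \<and> \<delta>^2 \<le> (4 * C^2 + 16 * C^2 * L * S) * a"
    by (rule scalar_step[OF L0 etaL F1 F2 F3 F4 D2b F5 d0 dC C0 n0 S0])
  have coef: "4 * C^2 + 16 * C^2 * L * S \<le> 36 * R^2 * S * A / (1 - \<gamma>)^5"
  proof -
    have X1: "1 \<le> S * A / (1 - \<gamma>)^3"
    proof -
      have "(1 - \<gamma>)^3 \<le> 1" using g1' g0 by (intro power_le_one) auto
      also have "1 \<le> S * A" using S1 A1 by (metis mult_mono' mult_1 zero_le_one)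
      finally show ?thesis using g1' by simp
    qed
    have "16 * L * S = 32 * \<gamma> * (S * A / (1 - \<gamma>)^3)" unfolding L_def by (simp add: field_simps)
    also have "\<dots> \<le> 32 * (S * A / (1 - \<gamma>)^3)"
    proof -
      have X0: "0 \<le> S * A / (1 - \<gamma>)^3" using X1 by linarith
      show ?thesis using g1 X0 by (intro mult_right_mono) auto
    qed
    finally have "4 + 16 * L * S \<le> 36 * (S * A / (1 - \<gamma>)^3)" using X1 by (rule aux_lin)
    then have "C^2 * (4 + 16 * L * S) \<le> C^2 * (36 * (S * A / (1 - \<gamma>)^3))" by (intro mult_left_mono) auto
    moreover have "C^2 * (36 * (S * A / (1 - \<gamma>)^3)) = 36 * R^2 * S * A / (1 - \<gamma>)^5"
    proof -
      have e5: "(1 - \<gamma>)^5 = (1 - \<gamma>)^2 * (1 - \<gamma>)^3" by (simp add: power_add[symmetric])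
      show ?thesis unfolding C_def e5 by (simp add: power_divide mult_ac)
    qed
    ultimately show ?thesis by (simp add: algebra_simps)
  qed
  have "\<delta>^2 \<le> 36 * R^2 * S * A / (1 - \<gamma>)^5 * a"
    using main coef by (meson order_trans mult_right_mono)
  then show ?thesis using pnP main unfolding \<delta>_def a_def S_def A_def by simp
qed

end
theorem theorem2:
  fixes P :: "'s::finite \<Rightarrow> 'a::finite \<Rightarrow> 's \<Rightarrow> real"
    and R :: "'s \<Rightarrow> 'a \<Rightarrow> real"
    and \<gamma> :: real
    and \<rho> :: "'s \<Rightarrow> real"
    and pistar :: "'s \<Rightarrow> 'a \<Rightarrow> real"
    and pol :: "nat \<Rightarrow> 's \<Rightarrow> 'a \<Rightarrow> real"
    and \<eta> :: real
  assumes mdp: "is_mdp P R \<gamma>"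
    and rho: "is_distr \<rho>"
    and opt: "pistar \<in> Policies"
    and opt_min: "\<forall>pol'\<in>Policies. \<forall>s. Val P R \<gamma> pistar s \<le> Val P R \<gamma> pol' s"
    and init: "pol 0 \<in> Policies"
    and eta: "\<eta> = (1 - \<gamma>)^3 / (2 * \<gamma> * real (card (UNIV :: 'a set)))"
    and iter: "\<forall>k. pol (Suc k) = proj_Pi (\<lambda>s a. pol k s a - \<eta> * grad_V P R \<gamma> \<rho> (pol k) s a)"
    and k: "k \<ge> 1"
  shows "ereal (Val_rho P R \<gamma> \<rho> (pol k) - Val_star P R \<gamma> \<rho>)
     \<le> ereal (128 * real (card (UNIV :: 's set)) * real (card (UNIV :: 'a set)) / (real k * (1 - \<gamma>)^5))
        * (ratio_inf (dvisit_rho P \<gamma> \<rho> pistar) \<rho>)^2"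
proof -
  have Pnn: "\<forall>s a s'. 0 \<le> P s a s'" and Psum: "\<forall>s a. (\<Sum>s'\<in>UNIV. P s a s') = 1"
    and c: "\<forall>s a. 0 \<le> R s a \<and> R s a \<le> 1" and gp: "0 < \<gamma>" and g1: "\<gamma> < 1"
    using mdp unfolding is_mdp_def by auto
  have g0: "0 \<le> \<gamma>" using gp by simp
  have g1': "0 < 1 - \<gamma>" using g1 by simp
  have rho0: "\<forall>s. 0 \<le> \<rho> s" and rho1: "(\<Sum>s\<in>UNIV. \<rho> s) = 1" using rho unfolding is_distr_def by auto
  have optv: "\<forall>p\<in>Policies. Val_rho P R \<gamma> \<rho> pistar \<le> Val_rho P R \<gamma> \<rho> p"
    using opt_min rho0 unfolding Val_rho_def by (auto intro!: sum_mono mult_left_mono)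
  have Vstar: "Val_star P R \<gamma> \<rho> = Val_rho P R \<gamma> \<rho> pistar"
    unfolding Val_star_def using opt optv by (intro cInf_eq_minimum) auto
  have polP: "pol j \<in> Policies" for j
  proof (induction j)
    case 0 then show ?case by (rule init)
  next
    case (Suc j) then show ?case using iter proj_char by metis
  qed
  define S where "S = real (card (UNIV :: 's set))"
  define A where "A = real (card (UNIV :: 'a set))"
  have A1: "1 \<le> A" unfolding A_def by (simp add: Suc_le_eq)
  have S1: "1 \<le> S" unfolding S_def by (simp add: Suc_le_eq)
  define cc where "cc = 128 * S * A / (real k * (1 - \<gamma>)^5)"
  have cc0: "0 < cc" unfolding cc_def using A1 S1 k g1' by simp
  define d where "d = dvisit_rho P \<gamma> \<rho> pistar"
  define ent where "ent = (\<lambda>s. if \<rho> s = 0 then (if d s = 0 then 1 else \<infinity>) else ereal (d s / \<rho> s))"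
  have ri: "ratio_inf d \<rho> = Max (range ent)" unfolding ratio_inf_def ent_def ..
  have entle: "ent s \<le> ratio_inf d \<rho>" for s unfolding ri by (rule Max_ge) auto
  show ?thesis
  proof (cases "ratio_inf d \<rho>")
    case PInf
    have "ereal cc * (\<infinity>::ereal)^2 = \<infinity>" using cc0 by (simp add: power2_eq_square)
    then show ?thesis using PInf unfolding d_def cc_def S_def A_def by simp
  next
    case MInf
    have "ent undefined \<noteq> -\<infinity>" unfolding ent_def by auto
    then show ?thesis using entle[of undefined] MInf by simp
  next
    case (real Rr)
    have Rb: "\<forall>s. d s \<le> Rr * \<rho> s"
    proof
      fix s
      show "d s \<le> Rr * \<rho> s"
      proof (cases "\<rho> s = 0")
        case True
        then have "d s = 0" using entle[of s] real unfolding ent_def by (auto split: if_splits)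
        then show ?thesis using True by simp
      next
        case False
        then have "\<rho> s > 0" using rho0[rule_format, of s] by linarith
        moreover have "d s / \<rho> s \<le> Rr" using entle[of s] real False unfolding ent_def by simp
        ultimately show ?thesis by (simp add: divide_le_eq mult.commute)
      qed
    qed
    have dsum: "(\<Sum>s\<in>UNIV. d s) = 1"
    proof -
      have "(\<Sum>s\<in>UNIV. d s) = (\<Sum>s0\<in>UNIV. \<rho> s0 * (\<Sum>s\<in>UNIV. dvisit P \<gamma> pistar s0 s))"
        unfolding d_def dvisit_rho_def by (subst sum.swap) (simp add: sum_distrib_left)
      also have "\<dots> = 1" using dvisit_sum[OF Pnn Psum g0 g1 opt] rho1 by simp
      finally show ?thesis .
    qed
    have R1: "1 \<le> Rr"
    proof -
      have "(\<Sum>s\<in>UNIV. d s) \<le> (\<Sum>s\<in>UNIV. Rr * \<rho> s)" using Rb by (intro sum_mono) auto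
      then show ?thesis using dsum rho1 by (simp add: sum_distrib_left[symmetric])
    qed
    define \<delta> where "\<delta> = (\<lambda>j. Val_rho P R \<gamma> \<rho> (pol j) - Val_rho P R \<gamma> \<rho> pistar)"
    define K where "K = 36 * Rr^2 * S * A / (1 - \<gamma>)^5"
    have K0: "0 < K" unfolding K_def using R1 S1 A1 g1' by simp
    have stp: "(\<delta> j)^2 \<le> K * (\<delta> j - \<delta> (Suc j))" for j
    proof -
      have "pol (Suc j) \<in> Policies \<and> 0 \<le> Val_rho P R \<gamma> \<rho> (pol j) - Val_rho P R \<gamma> \<rho> (pol (Suc j)) \<and>
        (Val_rho P R \<gamma> \<rho> (pol j) - Val_rho P R \<gamma> \<rho> pistar)^2
        \<le> 36 * Rr^2 * S * A / (1 - \<gamma>)^5 * (Val_rho P R \<gamma> \<rho> (pol j) - Val_rho P R \<gamma> \<rho> (pol (Suc j)))"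
        unfolding S_def A_def
        by (rule one_step[OF Pnn Psum g0 g1 gp c rho0 rho1 opt optv R1 _ polP eta iter[rule_format, of j]])
           (use Rb in \<open>simp add: d_def\<close>)
      then show ?thesis unfolding \<delta>_def K_def by simp
    qed
    have dnn: "\<forall>j. 0 \<le> \<delta> j" unfolding \<delta>_def using optv polP by auto
    have "\<delta> k \<le> K / real k" by (rule recur[OF K0 dnn _ k]) (use stp in auto)
    also have "\<dots> \<le> cc * Rr^2"
    proof -
      have "K / real k = 36 * (S * A / (real k * (1 - \<gamma>)^5)) * Rr^2" unfolding K_def by (simp add: field_simps)
      also have "\<dots> \<le> 128 * (S * A / (real k * (1 - \<gamma>)^5)) * Rr^2"
        using S1 A1 k g1' by (intro mult_right_mono) auto
      finally show ?thesis unfolding cc_def by (simp add: field_simps)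
    qed
    finally have "\<delta> k \<le> cc * Rr^2" .
    then show ?thesis using real Vstar unfolding \<delta>_def d_def cc_def S_def A_def by (simp add: power2_eq_square)
  qed
qed

end
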